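(* A well-founded order $P$ is up-regular if and only if it has no level-induced suborder isomorphic to $O_{obs1}$ and no level-induced suborder isomorphic to $O_{obs2}$. Consequently every well-founded order with property (itov) is up-regular.
   Context: Orders are partial orders; $x\sim y$ means $x\ne y$ and $x,y$ incomparable. $O_{obs1}$ is the order on $\{a,b,c,d\}$ whose only comparabilities are $a<b$, $c<d$; $O_{obs2}$ is the order on $\{a,b,c,d\}$ whose only comparabilities are $a<b$, $c<d$, $c<b$. Property (itov): no induced suborder isomorphic to $O_{obs1}$ or $O_{obs2}$. For a well-founded order $Q$, $\mathrm{Level}_Q(x)=\sup\{\mathrm{Level}_Q(y)+1:y<x\}$. A level-induced suborder of $P$ is a subset $S$ with induced order $P|_S$ such that for all $x,y\in S$: $\mathrm{Level}_{P|_S}(x)=\mathrm{Level}_{P|_S}(y)$ iff $\mathrm{Level}_P(x)=\mathrm{Level}_P(y)$. An element $x$ of a well-founded order $P$ is up-regular if for all $y,z$ with $\mathrm{Level}_P(x)<\mathrm{Level}_P(y)=\mathrm{Level}_P(z)$ we have $x<y\iff x<z$; $P$ is up-regular if all its elements are. *)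

theory Defs
  imports Main
begin

definition strict_po_on :: "'a set \<Rightarrow> ('a \<Rightarrow> 'a \<Rightarrow> bool) \<Rightarrow> bool" where
  "strict_po_on A r \<longleftrightarrow>
     (\<forall>x\<in>A. \<not> r x x) \<and> (\<forall>x\<in>A. \<forall>y\<in>A. \<forall>z\<in>A. r x y \<longrightarrow> r y z \<longrightarrow> r x z)"

definition wf_order :: "'a set \<Rightarrow> ('a \<Rightarrow> 'a \<Rightarrow> bool) \<Rightarrow> bool" where
  "wf_order A r \<longleftrightarrow> strict_po_on A r \<and> wfP (\<lambda>x y. x \<in> A \<and> y \<in> A \<and> r x y)"

text \<open>Comparison of (ordinal-valued) levels:
  Level(x) \<le> Level(y) iff for every x' < x there is y' < y with Level(x') \<le> Level(y').
  This is the well-founded recursion unfolding Level(x) = sup{Level(x')+1 : x' < x}.\<close>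

inductive level_le :: "'a set \<Rightarrow> ('a \<Rightarrow> 'a \<Rightarrow> bool) \<Rightarrow> 'a \<Rightarrow> 'a \<Rightarrow> bool"
  for A r where
  "\<lbrakk> x \<in> A; y \<in> A;
     \<forall>x'\<in>A. r x' x \<longrightarrow> (\<exists>y'\<in>A. r y' y \<and> level_le A r x' y') \<rbrakk>
   \<Longrightarrow> level_le A r x y"

definition level_eq :: "'a set \<Rightarrow> ('a \<Rightarrow> 'a \<Rightarrow> bool) \<Rightarrow> 'a \<Rightarrow> 'a \<Rightarrow> bool" where
  "level_eq A r x y \<longleftrightarrow> level_le A r x y \<and> level_le A r y x"

definition level_less :: "'a set \<Rightarrow> ('a \<Rightarrow> 'a \<Rightarrow> bool) \<Rightarrow> 'a \<Rightarrow> 'a \<Rightarrow> bool" where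
  "level_less A r x y \<longleftrightarrow> \<not> level_le A r y x"

definition up_regular_elem :: "'a set \<Rightarrow> ('a \<Rightarrow> 'a \<Rightarrow> bool) \<Rightarrow> 'a \<Rightarrow> bool" where
  "up_regular_elem A r x \<longleftrightarrow>
     (\<forall>y\<in>A. \<forall>z\<in>A. level_less A r x y \<and> level_eq A r y z \<longrightarrow> (r x y \<longleftrightarrow> r x z))"

definition up_regular :: "'a set \<Rightarrow> ('a \<Rightarrow> 'a \<Rightarrow> bool) \<Rightarrow> bool" where
  "up_regular A r \<longleftrightarrow> (\<forall>x\<in>A. up_regular_elem A r x)"

definition level_induced :: "'a set \<Rightarrow> ('a \<Rightarrow> 'a \<Rightarrow> bool) \<Rightarrow> 'a set \<Rightarrow> bool" where
  "level_induced A r S \<longleftrightarrow> S \<subseteq> A \<and>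
     (\<forall>x\<in>S. \<forall>y\<in>S. level_eq S r x y \<longleftrightarrow> level_eq A r x y)"

text \<open>The obstructions on {a,b,c,d} encoded as {0,1,2,3}: a=0, b=1, c=2, d=3 (strict relations).\<close>

definition O_obs1 :: "nat \<Rightarrow> nat \<Rightarrow> bool" where
  "O_obs1 i j \<longleftrightarrow> (i, j) \<in> {(0, 1), (2, 3)}"

definition O_obs2 :: "nat \<Rightarrow> nat \<Rightarrow> bool" where
  "O_obs2 i j \<longleftrightarrow> (i, j) \<in> {(0, 1), (2, 3), (2, 1)}"

definition iso_to :: "(nat \<Rightarrow> nat \<Rightarrow> bool) \<Rightarrow> 'a set \<Rightarrow> ('a \<Rightarrow> 'a \<Rightarrow> bool) \<Rightarrow> bool" where
  "iso_to q S r \<longleftrightarrow> (\<exists>f. bij_betw f {0..3} S \<and>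
     (\<forall>i\<in>{0..3}. \<forall>j\<in>{0..3}. q i j \<longleftrightarrow> r (f i) (f j)))"

definition itov :: "'a set \<Rightarrow> ('a \<Rightarrow> 'a \<Rightarrow> bool) \<Rightarrow> bool" where
  "itov A r \<longleftrightarrow> \<not> (\<exists>S\<subseteq>A. iso_to O_obs1 S r) \<and> \<not> (\<exists>S\<subseteq>A. iso_to O_obs2 S r)"

end

theory Submission
  imports Defs
begin

lemma wo_induct[consumes 2, case_names step]:
  assumes wo: "wf_order A r" and x: "x \<in> A"
    and step: "\<And>x. x \<in> A \<Longrightarrow> (\<And>y. y \<in> A \<Longrightarrow> r y x \<Longrightarrow> P y) \<Longrightarrow> P x"
  shows "P x"
proof -
  have wf: "wfP (\<lambda>x y. x \<in> A \<and> y \<in> A \<and> r x y)" using wo unfolding wf_order_def by blast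
  have "x \<in> A \<longrightarrow> P x"
    using wf by (induct x rule: wfp_induct_rule) (auto intro: step)
  then show ?thesis using x by blast
qed

lemma wo_irrefl: "wf_order A r \<Longrightarrow> x \<in> A \<Longrightarrow> \<not> r x x"
  unfolding wf_order_def strict_po_on_def by blast

lemma wo_trans: "wf_order A r \<Longrightarrow> x \<in> A \<Longrightarrow> y \<in> A \<Longrightarrow> z \<in> A \<Longrightarrow> r x y \<Longrightarrow> r y z \<Longrightarrow> r x z"
  unfolding wf_order_def strict_po_on_def by blast

lemma wo_sub: assumes "wf_order A r" "S \<subseteq> A" shows "wf_order S r"
proof -
  have w: "wfP (\<lambda>x y. x \<in> A \<and> y \<in> A \<and> r x y)" using assms unfolding wf_order_def by blast
  have "wfP (\<lambda>x y. x \<in> S \<and> y \<in> S \<and> r x y)"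
    by (rule wfp_subset[OF w]) (use assms(2) in auto)
  then show ?thesis using assms unfolding wf_order_def strict_po_on_def by blast
qed

lemmas le_simps = level_le.simps

lemma le_I: "x \<in> A \<Longrightarrow> y \<in> A \<Longrightarrow> (\<And>x'. x' \<in> A \<Longrightarrow> r x' x \<Longrightarrow> \<exists>y'\<in>A. r y' y \<and> level_le A r x' y') \<Longrightarrow> level_le A r x y"
  by (rule level_le.intros) blast+

lemma le_N: "\<not> level_le A r x y \<Longrightarrow> x \<in> A \<Longrightarrow> y \<in> A \<Longrightarrow> \<exists>x'\<in>A. r x' x \<and> (\<forall>y'\<in>A. r y' y \<longrightarrow> \<not> level_le A r x' y')"
  using le_I by metis

lemma le_D: "level_le A r x y \<Longrightarrow> x' \<in> A \<Longrightarrow> r x' x \<Longrightarrow> \<exists>y'\<in>A. r y' y \<and> level_le A r x' y'"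
  by (erule level_le.cases) blast

lemma le_A: "level_le A r x y \<Longrightarrow> x \<in> A \<and> y \<in> A"
  by (erule level_le.cases) auto

lemma le_refl:
  assumes wo: "wf_order A r" and x: "x \<in> A" shows "level_le A r x x"
  using wo x
proof (induct x rule: wo_induct)
  case (step x)
  then show ?case by (intro le_I) blast+
qed

lemma le_trans:
  assumes wo: "wf_order A r" and "level_le A r x y" "level_le A r y z"
  shows "level_le A r x z"
proof -
  have x: "x \<in> A" using assms le_A by metis
  have "\<forall>y z. level_le A r x y \<longrightarrow> level_le A r y z \<longrightarrow> level_le A r x z"
    using wo x
  proof (induct x rule: wo_induct)
    case (step x)
    show ?case
    proof (intro allI impI)
      fix y z assume xy: "level_le A r x y" and yz: "level_le A r y z"
      have zA: "z \<in> A" using yz le_A by metis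
      show "level_le A r x z"
      proof (rule le_I)
        show "x \<in> A" by fact
        show "z \<in> A" by fact
        fix x' assume x': "x' \<in> A" "r x' x"
        obtain y' where y': "y' \<in> A" "r y' y" "level_le A r x' y'"
          using le_D[OF xy x'] by blast
        obtain z' where z': "z' \<in> A" "r z' z" "level_le A r y' z'"
          using le_D[OF yz y'(1,2)] by blast
        have "level_le A r x' z'" using step(2)[OF x'] y' z' by blast
        then show "\<exists>z'\<in>A. r z' z \<and> level_le A r x' z'" using z' by blast
      qed
    qed
  qed
  then show ?thesis using assms by blast
qed

lemma le_noback:
  assumes wo: "wf_order A r" and "level_le A r u v" "r v u"
  shows False
proof -
  have u: "u \<in> A" using assms le_A by metis
  have "\<forall>v. level_le A r u v \<longrightarrow> r v u \<longrightarrow> False"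
    using wo u
  proof (induct u rule: wo_induct)
    case (step u)
    show ?case
    proof (intro allI impI)
      fix v assume uv: "level_le A r u v" and vu: "r v u"
      have vA: "v \<in> A" using uv le_A by metis
      obtain v' where "v' \<in> A" "r v' v" "level_le A r v v'"
        using le_D[OF uv vA vu] by blast
      then show False using step(2)[OF vA vu] by blast
    qed
  qed
  then show ?thesis using assms by blast
qed

lemma le_total:
  assumes wo: "wf_order A r" and x: "x \<in> A" and y: "y \<in> A"
  shows "level_le A r x y \<or> level_le A r y x"
proof -
  have "\<forall>y\<in>A. level_le A r x y \<or> level_le A r y x"
    using wo x
  proof (induct x rule: wo_induct)
    case (step x)
    show ?case
    proof (rule ballI, rule ccontr)
      fix y assume yA: "y \<in> A" and n: "\<not> (level_le A r x y \<or> level_le A r y x)"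
      from n have "\<not> level_le A r x y" by blast
      then obtain x' where x': "x' \<in> A" "r x' x" "\<forall>y'\<in>A. r y' y \<longrightarrow> \<not> level_le A r x' y'"
        using le_N[OF _ step(1) yA] by blast
      have x'2: "\<forall>y'\<in>A. r y' y \<longrightarrow> level_le A r y' x'" using step(2)[OF x'(1,2)] x'(3) by blast
      from n have "\<not> level_le A r y x" by blast
      then obtain y1 where y1: "y1 \<in> A" "r y1 y" "\<forall>x''\<in>A. r x'' x \<longrightarrow> \<not> level_le A r y1 x''"
        using le_N[OF _ yA step(1)] by blast
      show False using x'2 y1 x' by blast
    qed
  qed
  then show ?thesis using y by blast
qed

lemma le_S:
  assumes wo: "wf_order A r" and x: "x \<in> A" and y: "y \<in> A" and n: "\<not> level_le A r y x"
  shows "\<exists>y'\<in>A. r y' y \<and> level_le A r x y'"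
proof -
  have "\<forall>x\<in>A. \<not> level_le A r y x \<longrightarrow> (\<exists>y'\<in>A. r y' y \<and> level_le A r x y')"
    using wo y
  proof (induct y rule: wo_induct)
    case (step y)
    show ?case
    proof (intro ballI impI)
      fix x assume xA: "x \<in> A" and n: "\<not> level_le A r y x"
      then obtain y' where y': "y' \<in> A" "r y' y" "\<forall>x'\<in>A. r x' x \<longrightarrow> \<not> level_le A r y' x'"
        using le_N[OF n step(1) xA] by blast
      have "level_le A r x y'"
      proof (rule le_I)
        fix x' assume "x' \<in> A" "r x' x"
        then show "\<exists>y''\<in>A. r y'' y' \<and> level_le A r x' y''"
          using step(2)[OF y'(1,2)] y'(3) by blast
      qed (use xA y' in auto)
      then show "\<exists>y'\<in>A. r y' y \<and> level_le A r x y'" using y' by blast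
    qed
  qed
  then show ?thesis using x n by blast
qed

lemma r_le:
  assumes wo: "wf_order A r" and "x \<in> A" "y \<in> A" "r x y"
  shows "level_le A r x y"
proof (rule le_I)
  fix x' assume "x' \<in> A" "r x' x"
  then show "\<exists>y'\<in>A. r y' y \<and> level_le A r x' y'"
    using assms wo_trans[OF wo] le_refl[OF wo] by blast
qed (use assms in auto)

lemma le_E:
  assumes wo: "wf_order A r" and z: "z \<in> A" and a: "a \<in> A" and n: "\<not> level_le A r z a"
  shows "\<exists>w\<in>A. r w z \<and> level_le A r w a \<and> level_le A r a w"
proof -
  have "\<forall>a\<in>A. \<not> level_le A r z a \<longrightarrow> (\<exists>w\<in>A. r w z \<and> level_le A r w a \<and> level_le A r a w)"
    using wo z
  proof (induct z rule: wo_induct)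
    case (step z)
    show ?case
    proof (intro ballI impI)
      fix a assume aA: "a \<in> A" and n: "\<not> level_le A r z a"
      obtain z' where z': "z' \<in> A" "r z' z" "level_le A r a z'"
        using le_S[OF wo aA step(1) n] by blast
      show "\<exists>w\<in>A. r w z \<and> level_le A r w a \<and> level_le A r a w"
      proof (cases "level_le A r z' a")
        case True then show ?thesis using z' by blast
      next
        case False
        then obtain w where "w \<in> A" "r w z'" "level_le A r w a" "level_le A r a w"
          using step(2)[OF z'(1,2)] aA by blast
        then show ?thesis using wo_trans[OF wo _ z'(1) step(1) _ z'(2)] by blast
      qed
    qed
  qed
  then show ?thesis using a n by blast
qed

lemma le_min:
  assumes "u \<in> S" "v \<in> S" "\<forall>u'\<in>S. \<not> r u' u"
  shows "level_le S r u v"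
  using assms by (intro le_I) blast+

lemma le_one:
  assumes "u \<in> S" "v \<in> S" "\<forall>u'\<in>S. r u' u \<longrightarrow> (\<forall>u''\<in>S. \<not> r u'' u')"
    "v' \<in> S" "r v' v"
  shows "level_le S r u v"
  using assms by (intro le_I) (blast intro: le_min)+


lemma eq_transfer:
  assumes s1: "\<And>u v. E1 u v \<Longrightarrow> E1 v u" and t1: "\<And>u v w. E1 u v \<Longrightarrow> E1 v w \<Longrightarrow> E1 u w"
    and s2: "\<And>u v. E2 u v \<Longrightarrow> E2 v u" and t2: "\<And>u v w. E2 u v \<Longrightarrow> E2 v w \<Longrightarrow> E2 u w"
    and h: "E1 x w" "E1 y z" "\<not> E1 x y" "E2 x w" "E2 y z" "\<not> E2 x y"
    and u: "u \<in> {x,y,w,z}" and v: "v \<in> {x,y,w,z}"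
  shows "E1 u v \<longleftrightarrow> E2 u v"
proof -
  have r1: "E1 x x" "E1 y y" "E1 w w" "E1 z z" using s1 t1 h by metis+
  have r2: "E2 x x" "E2 y y" "E2 w w" "E2 z z" using s2 t2 h by metis+
  have n1: "\<not> E1 x z" "\<not> E1 w y" "\<not> E1 w z" using s1 t1 h by metis+
  have n2: "\<not> E2 x z" "\<not> E2 w y" "\<not> E2 w z" using s2 t2 h by metis+
  show ?thesis using u v r1 r2 n1 n2 h s1 s2 by blast
qed

lemma obs_bad:
  assumes wo: "wf_order A r" and ur: "up_regular A r" and li: "level_induced A r S"
    and iso: "iso_to q S r"
    and q01: "q 0 1" and q23: "q 2 3" and nq03: "\<not> q 0 3"
    and qmin: "\<And>i. i \<in> {0..3} \<Longrightarrow> \<not> q i 0 \<and> \<not> q i 2"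
    and q1: "\<And>i. i \<in> {0..3} \<Longrightarrow> q i 1 \<Longrightarrow> i = 0 \<or> i = 2"
    and q3: "\<And>i. i \<in> {0..3} \<Longrightarrow> q i 3 \<Longrightarrow> i = 2"
  shows False
proof -
  obtain f where bij: "bij_betw f {0..3} S"
    and qr: "\<forall>i\<in>{0..3}. \<forall>j\<in>{0..3}. q i j \<longleftrightarrow> r (f i) (f j)"
    using iso unfolding iso_to_def by blast
  have SA: "S \<subseteq> A" using li unfolding level_induced_def by blast
  have Sf: "S = f ` {0..3}" using bij by (simp add: bij_betw_def)
  have inS: "f i \<in> S" if "i \<in> {0..3}" for i using Sf that by blast
  have woS: "wf_order S r" using wo_sub[OF wo SA] .
  have i0: "(0::nat) \<in> {0..3}" and i1: "(1::nat) \<in> {0..3}" and i2: "(2::nat) \<in> {0..3}"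
    and i3: "(3::nat) \<in> {0..3}" by auto
  have mn: "\<forall>u\<in>S. \<not> r u (f i)" if "i = 0 \<or> i = 2" for i
  proof
    fix u assume "u \<in> S"
    then obtain j where j: "j \<in> {0..3}" "u = f j" using Sf by blast
    have "i \<in> {0..3}" using that by auto
    then show "\<not> r u (f i)" using qr j qmin[OF j(1)] that by blast
  qed
  have a: "level_le S r (f 1) (f 3)"
  proof (rule le_one[where v'="f 2"])
    show "\<forall>u'\<in>S. r u' (f 1) \<longrightarrow> (\<forall>u''\<in>S. \<not> r u'' u')"
    proof (rule ballI, rule impI)
      fix u' assume "u' \<in> S" "r u' (f 1)"
      then obtain j where j: "j \<in> {0..3}" "u' = f j" using Sf by blast
      then have "q j 1" using qr i1 \<open>r u' (f 1)\<close> by blast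
      then have "j = 0 \<or> j = 2" using q1 j(1) by blast
      then show "\<forall>u''\<in>S. \<not> r u'' u'" using mn j(2) by blast
    qed
    show "r (f 2) (f 3)" using qr i2 i3 q23 by blast
  qed (use inS i1 i2 i3 in auto)
  have b: "level_le S r (f 3) (f 1)"
  proof (rule le_one[where v'="f 0"])
    show "\<forall>u'\<in>S. r u' (f 3) \<longrightarrow> (\<forall>u''\<in>S. \<not> r u'' u')"
    proof (rule ballI, rule impI)
      fix u' assume "u' \<in> S" "r u' (f 3)"
      then obtain j where j: "j \<in> {0..3}" "u' = f j" using Sf by blast
      then have "q j 3" using qr i3 \<open>r u' (f 3)\<close> by blast
      then have "j = 2" using q3 j(1) by blast
      then show "\<forall>u''\<in>S. \<not> r u'' u'" using mn j(2) by blast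
    qed
    show "r (f 0) (f 1)" using qr i0 i1 q01 by blast
  qed (use inS i1 i0 i3 in auto)
  have eqA: "level_eq A r (f 1) (f 3)"
    using a b li inS[OF i1] inS[OF i3] unfolding level_induced_def level_eq_def by blast
  have r01: "r (f 0) (f 1)" using qr i0 i1 q01 by blast
  have n03: "\<not> r (f 0) (f 3)" using qr i0 i3 nq03 by blast
  have less: "level_less A r (f 0) (f 1)"
    unfolding level_less_def using le_noback[OF wo _ r01] by blast
  have "up_regular_elem A r (f 0)" using ur inS[OF i0] SA unfolding up_regular_def by blast
  then show False unfolding up_regular_elem_def using less eqA r01 n03 inS[OF i1] inS[OF i3] SA by blast
qed


lemma eq_sym: "level_eq A r x y \<Longrightarrow> level_eq A r y x"
  unfolding level_eq_def by blast

lemma eq_trans: "wf_order A r \<Longrightarrow> level_eq A r x y \<Longrightarrow> level_eq A r y z \<Longrightarrow> level_eq A r x z"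
  unfolding level_eq_def using le_trans by metis

lemma iso4:
  assumes d: "x \<noteq> y" "x \<noteq> w" "x \<noteq> z" "y \<noteq> w" "y \<noteq> z" "w \<noteq> z"
    and t: "\<And>i j. i \<in> {0,1,2,3} \<Longrightarrow> j \<in> {0,1,2,3} \<Longrightarrow>
       q i j \<longleftrightarrow> r ((\<lambda>i::nat. if i = 0 then x else if i = 1 then y else if i = 2 then w else z) i)
                     ((\<lambda>i::nat. if i = 0 then x else if i = 1 then y else if i = 2 then w else z) j)"
  shows "iso_to q {x,y,w,z} r"
proof -
  define f where "f = (\<lambda>i::nat. if i = 0 then x else if i = 1 then y else if i = 2 then w else z)"
  have e: "{0..3::nat} = {0,1,2,3}" by auto
  have "bij_betw f {0..3} {x,y,w,z}"
    unfolding bij_betw_def inj_on_def e f_def using d by auto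
  moreover have "\<forall>i\<in>{0..3}. \<forall>j\<in>{0..3}. q i j \<longleftrightarrow> r (f i) (f j)"
    using t unfolding e f_def by blast
  ultimately show ?thesis unfolding iso_to_def by blast
qed

lemma key:
  assumes wo: "wf_order A r" and xA: "x \<in> A" and yA: "y \<in> A" and zA: "z \<in> A"
    and nyx: "\<not> level_le A r y x" and yz: "level_le A r y z" and zy: "level_le A r z y"
    and rxy: "r x y" and nxz: "\<not> r x z"
  shows "\<exists>S. level_induced A r S \<and> (iso_to O_obs1 S r \<or> iso_to O_obs2 S r)"
proof -
  have nzx: "\<not> level_le A r z x" using le_trans[OF wo yz] nyx by blast
  obtain w where wA: "w \<in> A" and rwz: "r w z" and wx: "level_le A r w x" and xw: "level_le A r x w"
    using le_E[OF wo zA xA nzx] by blast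
  have xz: "level_le A r x z" using le_total[OF wo xA zA] nzx by blast
  have xy: "level_le A r x y" using r_le[OF wo xA yA rxy] .
  have wy: "level_le A r w y" using le_trans[OF wo wx xy] .
  have wz: "level_le A r w z" using r_le[OF wo wA zA rwz] .
  have irr: "\<not> r x x" "\<not> r y y" "\<not> r z z" "\<not> r w w" using wo_irrefl[OF wo] xA yA zA wA by auto
  have nr: "\<not> r y x" "\<not> r w x" "\<not> r z x" "\<not> r x w" "\<not> r y w" "\<not> r z w" "\<not> r y z" "\<not> r z y"
    using le_noback[OF wo xy] le_noback[OF wo xw] le_noback[OF wo xz] le_noback[OF wo wx]
      le_noback[OF wo wy] le_noback[OF wo wz] le_noback[OF wo zy] le_noback[OF wo yz] by auto
  have d: "x \<noteq> y" "x \<noteq> w" "x \<noteq> z" "y \<noteq> w" "y \<noteq> z" "w \<noteq> z"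
    using irr rxy rwz nxz nr nzx le_refl[OF wo xA] by auto
  define S where "S = {x,y,w,z}"
  have SA: "S \<subseteq> A" using xA yA zA wA S_def by auto
  have woS: "wf_order S r" using wo_sub[OF wo SA] .
  have inS: "x \<in> S" "y \<in> S" "w \<in> S" "z \<in> S" unfolding S_def by auto
  have mx: "\<forall>u\<in>S. \<not> r u x" unfolding S_def using irr nr by auto
  have mw: "\<forall>u\<in>S. \<not> r u w" unfolding S_def using irr nr by auto
  have py: "\<forall>u'\<in>S. r u' y \<longrightarrow> (\<forall>u''\<in>S. \<not> r u'' u')"
    unfolding S_def using irr nr mx mw unfolding S_def by auto
  have pz: "\<forall>u'\<in>S. r u' z \<longrightarrow> (\<forall>u''\<in>S. \<not> r u'' u')"
    unfolding S_def using irr nr mx mw nxz unfolding S_def by auto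
  have sxw: "level_eq S r x w" unfolding level_eq_def using le_min inS mx mw by metis
  have syz: "level_eq S r y z" unfolding level_eq_def
    using le_one[OF inS(2) inS(4) py inS(3) rwz] le_one[OF inS(4) inS(2) pz inS(1) rxy] by blast
  have snxy: "\<not> level_eq S r x y" unfolding level_eq_def using le_noback[OF woS _ rxy] by blast
  have axw: "level_eq A r x w" "level_eq A r y z" "\<not> level_eq A r x y"
    unfolding level_eq_def using xw wx yz zy nyx by auto
  have li: "level_induced A r S"
    unfolding level_induced_def
  proof (intro conjI ballI)
    show "S \<subseteq> A" by fact
    fix u v assume u: "u \<in> S" and v: "v \<in> S"
    have u': "u \<in> {x,y,w,z}" using u S_def by simp
    have v': "v \<in> {x,y,w,z}" using v S_def by simp
    show "level_eq S r u v \<longleftrightarrow> level_eq A r u v"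
      by (rule eq_transfer[OF eq_sym eq_trans[OF woS] eq_sym eq_trans[OF wo] sxw syz snxy axw u' v'])
  qed
  show ?thesis
  proof (cases "r w y")
    case True
    have "iso_to O_obs2 S r" unfolding S_def
      by (rule iso4[OF d]) (use rxy rwz nxz irr nr True in \<open>auto simp: O_obs2_def\<close>)
    then show ?thesis using li by blast
  next
    case False
    have "iso_to O_obs1 S r" unfolding S_def
      by (rule iso4[OF d]) (use rxy rwz nxz irr nr False in \<open>auto simp: O_obs1_def\<close>)
    then show ?thesis using li by blast
  qed
qed

theorem mainTheorem10:
  fixes A :: "'a set" and r :: "'a \<Rightarrow> 'a \<Rightarrow> bool"
  assumes "wf_order A r"
  shows "(up_regular A r \<longleftrightarrow>
            \<not> (\<exists>S. level_induced A r S \<and> iso_to O_obs1 S r) \<and>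
            \<not> (\<exists>S. level_induced A r S \<and> iso_to O_obs2 S r))
         \<and> (itov A r \<longrightarrow> up_regular A r)"
proof -
  have wo: "wf_order A r" by fact
  have dir1: "up_regular A r \<Longrightarrow> level_induced A r S \<Longrightarrow> iso_to O_obs1 S r \<Longrightarrow> False" for S
    by (erule obs_bad[OF wo], assumption+) (auto simp: O_obs1_def)
  have dir2: "up_regular A r \<Longrightarrow> level_induced A r S \<Longrightarrow> iso_to O_obs2 S r \<Longrightarrow> False" for S
    by (erule obs_bad[OF wo], assumption+) (auto simp: O_obs2_def)
  have dir3: "\<exists>S. level_induced A r S \<and> (iso_to O_obs1 S r \<or> iso_to O_obs2 S r)"
    if nu: "\<not> up_regular A r"
  proof -
    obtain x where xA: "x \<in> A" and nx: "\<not> up_regular_elem A r x"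
      using nu unfolding up_regular_def by blast
    then obtain y z where yA: "y \<in> A" and zA: "z \<in> A" and l: "\<not> level_le A r y x"
      and yz: "level_le A r y z" and zy: "level_le A r z y" and ne: "r x y \<noteq> r x z"
      unfolding up_regular_elem_def level_less_def level_eq_def by blast
    show ?thesis
    proof (cases "r x y")
      case True
      then show ?thesis using key[OF wo xA yA zA l yz zy] ne by blast
    next
      case False
      have l2: "\<not> level_le A r z x" using le_trans[OF wo yz] l by blast
      show ?thesis using key[OF wo xA zA yA l2 zy yz] ne False by blast
    qed
  qed
  have sub: "level_induced A r S \<Longrightarrow> S \<subseteq> A" for S unfolding level_induced_def by blast
  have A: "up_regular A r \<longleftrightarrow>
            \<not> (\<exists>S. level_induced A r S \<and> iso_to O_obs1 S r) \<and>
            \<not> (\<exists>S. level_induced A r S \<and> iso_to O_obs2 S r)"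
  proof
    assume "up_regular A r"
    then show "\<not> (\<exists>S. level_induced A r S \<and> iso_to O_obs1 S r) \<and>
            \<not> (\<exists>S. level_induced A r S \<and> iso_to O_obs2 S r)"
      using dir1 dir2 by blast
  next
    assume h: "\<not> (\<exists>S. level_induced A r S \<and> iso_to O_obs1 S r) \<and>
            \<not> (\<exists>S. level_induced A r S \<and> iso_to O_obs2 S r)"
    show "up_regular A r"
    proof (rule ccontr)
      assume "\<not> up_regular A r"
      then obtain S where "level_induced A r S" "iso_to O_obs1 S r \<or> iso_to O_obs2 S r"
        using dir3 by blast
      then show False using h by blast
    qed
  qed
  have B: "itov A r \<longrightarrow> up_regular A r"
  proof
    assume h: "itov A r"
    show "up_regular A r"
    proof (rule ccontr)
      assume "\<not> up_regular A r"
      then obtain S where S: "level_induced A r S" "iso_to O_obs1 S r \<or> iso_to O_obs2 S r"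
        using dir3 by blast
      have "S \<subseteq> A" using sub[OF S(1)] .
      then show False using h S(2) unfolding itov_def by blast
    qed
  qed
  show ?thesis using A B by (rule conjI)
qed

end
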